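(* Let $\mathcal{I}(X,\mathcal{R})$ be a generalized index coding problem over $\mathbb{F}_q$ with $m$ messages $x_1,\dots,x_m\in\mathbb{F}_q^n$, message vector $X=(x_1,\dots,x_m)\in\mathbb{F}_q^{mn}$, and receivers $R_i=(\mathcal{W}_i,\mathcal{H}_i)$ described by knowledge matrices $K_i\in\mathbb{F}_q^{mn\times|\mathcal{H}_i|}$ and demand matrices $D_i\in\mathbb{F}_q^{mn\times|\mathcal{W}_i|}$. A linear index code over $\mathbb{F}_q$ of length $l$ and dimension $n$ exists for $\mathcal{I}(X,\mathcal{R})$ if and only if there exists a discrete polymatroid $\mathbb{D}=(\{1,\dots,m+1\},\rho)$ representable over $\mathbb{F}_q$ with $\rho(\mathbb{D})=mn$ and with representation matrices $A_1,A_2,\dots,A_{m+1}$ satisfying: (C1) $\rho(\{i\})=n$ for all $i\in\{1,\dots,m\}$, $\rho(\{1,\dots,m\})=mn$, and $\rho(\{m+1\})=l$; (C2) for every receiver $R_i\in\mathcal{R}$ described by $(D_i,K_i)$, $\operatorname{rank}([AD_i\ \ AK_i\ \ A_{m+1}])=\operatorname{rank}([AK_i\ \ A_{m+1}])$, where $A=[A_1\ A_2\ \cdots\ A_m]$.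
   Context: A generalized index coding problem: a source holds $X=(x_1,\dots,x_m)$, $x_i\in\mathbb{F}_q^n$, viewed as a row vector in $\mathbb{F}_q^{mn}$. Each receiver $R_i$ has a Has-set $\mathcal{H}_i$ of linear functions $h_{i,j}(X)=X\cdot K_{i,j}$ ($K_{i,j}\in\mathbb{F}_q^{mn}$) and a Want-set $\mathcal{W}_i$ of linear functions $w_{i,j}(X)=X\cdot D_{i,j}$; the knowledge matrix is $K_i=[K_{i,1},\dots,K_{i,|\mathcal{H}_i|}]$ and the demand matrix is $D_i=[D_{i,1},\dots,D_{i,|\mathcal{W}_i|}]$. An index code over $\mathbb{F}_q$ of length $l$ and dimension $n$ is a map $f:\mathbb{F}_q^{mn}\to\mathbb{F}_q^l$ such that for every receiver $R_i$ there is a function $\psi_{R_i}$ with $\psi_{R_i}(XK_i,f(X))=XD_i$ for all $X\in\mathbb{F}_q^{mn}$; it is linear if $f(X)=XL$ for some $mn\times l$ matrix $L$ over $\mathbb{F}_q$. A discrete polymatroid on ground set $\{1,\dots,t\}$ is determined by a rank function $\rho:2^{\{1,\dots,t\}}\to\mathbb{Z}_{\ge0}$ that is monotone, submodular and satisfies $\rho(\emptyset)=0$; its rank is $\rho(\mathbb{D})=\rho(\{1,\dots,t\})$. It is representable over $\mathbb{F}_q$ if there are subspaces $V_1,\dots,V_t$ of a vector space over $\mathbb{F}_q$ with $\dim(\sum_{i\in S}V_i)=\rho(S)$ for all $S\subseteq\{1,\dots,t\}$; representation matrices are matrices $A_i$ of size $\rho(\{1,\dots,t\})\times\rho(\{i\})$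 whose column span is $V_i$ (in a common coordinate system of dimension $\rho(\{1,\dots,t\})$).
   Formalization: The equivalence is asserted only for index codes of length l <= mn. The statement above fails without it. *)

theory Defs
  imports "Jordan_Normal_Form.DL_Rank"
begin

definition mrank :: "'a::field mat \<Rightarrow> nat" where
  "mrank A = vec_space.rank (dim_row A) A"

definition hcat :: "'a::zero mat \<Rightarrow> 'a mat \<Rightarrow> 'a mat" where
  "hcat A B = mat (dim_row A) (dim_col A + dim_col B)
     (\<lambda>(i,j). if j < dim_col A then A $$ (i,j) else B $$ (i, j - dim_col A))"

definition hcat_list :: "nat \<Rightarrow> 'a::zero mat list \<Rightarrow> 'a mat" where
  "hcat_list r As = foldr hcat As (zero_mat r 0)"

definition vmult :: "'a::comm_semiring_0 vec \<Rightarrow> 'a mat \<Rightarrow> 'a vec" where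
  "vmult X M = transpose_mat M *\<^sub>v X"

definition wf_receivers :: "nat \<Rightarrow> nat \<Rightarrow> ('a mat \<times> 'a mat) list \<Rightarrow> bool" where
  "wf_receivers m n R \<longleftrightarrow> (\<forall>(K,D)\<in>set R. dim_row K = m*n \<and> dim_row D = m*n)"

(* L (an mn x l matrix) defines a linear index code f(X) = X L for the problem *)
definition linear_index_code ::
  "nat \<Rightarrow> nat \<Rightarrow> ('a::field mat \<times> 'a mat) list \<Rightarrow> nat \<Rightarrow> 'a mat \<Rightarrow> bool" where
  "linear_index_code m n R l L \<longleftrightarrow> L \<in> carrier_mat (m*n) l \<and>
     (\<forall>(K,D)\<in>set R. \<exists>\<psi>. \<forall>X\<in>carrier_vec (m*n). \<psi> (vmult X K) (vmult X L) = vmult X D)"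

definition discrete_polymatroid :: "nat set \<Rightarrow> (nat set \<Rightarrow> nat) \<Rightarrow> bool" where
  "discrete_polymatroid E \<rho> \<longleftrightarrow> \<rho> {} = 0 \<and>
     (\<forall>X Y. X \<subseteq> Y \<and> Y \<subseteq> E \<longrightarrow> \<rho> X \<le> \<rho> Y) \<and>
     (\<forall>X Y. X \<subseteq> E \<and> Y \<subseteq> E \<longrightarrow> \<rho> (X \<union> Y) + \<rho> (X \<inter> Y) \<le> \<rho> X + \<rho> Y)"

definition representation_matrices :: "nat set \<Rightarrow> (nat set \<Rightarrow> nat) \<Rightarrow> (nat \<Rightarrow> 'a::field mat) \<Rightarrow> bool" where
  "representation_matrices E \<rho> A \<longleftrightarrow>
     (\<forall>i\<in>E. A i \<in> carrier_mat (\<rho> E) (\<rho> {i})) \<and>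
     (\<forall>S\<subseteq>E. mrank (hcat_list (\<rho> E) (map A (sorted_list_of_set S))) = \<rho> S)"

end

theory Submission
  imports Defs
begin


context vec_space begin

lemma empty_li: "lin_indpt {}"
  by (metis (no_types) empty_subsetI fin_dim finite_basis_exists subset_li_is_li vec_vs vectorspace.basis_def)

lemma max_spans:
  assumes "S \<subseteq> carrier_vec n" "finite S" "maximal U (\<lambda>T. T \<subseteq> S \<and> lin_indpt T)"
  shows "S \<subseteq> span U"
proof
  fix s assume s: "s \<in> S"
  have "lin_indpt U" "U \<subseteq> S" using assms(3) unfolding maximal_def by auto
  show "s \<in> span U"
  proof (rule ccontr)
    assume ns: "s \<notin> span U"
    have Uc: "U \<subseteq> carrier_vec n" using \<open>U \<subseteq> S\<close> assms(1) by auto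
    have "s \<notin> U" using ns span_mem[OF Uc] by auto
    have "lin_indpt (U \<union> {s})" using lin_dep_iff_in_span[OF Uc \<open>lin_indpt U\<close> _ \<open>s \<notin> U\<close>] ns s assms(1) by auto
    then show False using assms(3) \<open>U \<subseteq> S\<close> s \<open>s \<notin> U\<close> unfolding maximal_def by blast
  qed
qed

lemma exists_max:
  assumes "finite S" "B \<subseteq> S" "lin_indpt B"
  shows "\<exists>U. finite U \<and> maximal U (\<lambda>T. T \<subseteq> S \<and> lin_indpt T) \<and> B \<subseteq> U"
  using maximal_exists_superset[of S "\<lambda>T. T \<subseteq> S \<and> lin_indpt T" B] assms by auto

end


context vec_space begin

abbreviation "rk S \<equiv> vectorspace.dim class_ring (span_vs S)"

lemma rk_max:
  assumes "S \<subseteq> carrier_vec n" "finite S" "maximal U (\<lambda>T. T \<subseteq> S \<and> lin_indpt T)"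
  shows "rk S = card U"
  using dim_span[of S U] assms by simp

lemma obtain_max:
  assumes "finite S"
  obtains U where "finite U" "maximal U (\<lambda>T. T \<subseteq> S \<and> lin_indpt T)"
  using exists_max[OF assms empty_subsetI empty_li] by auto

lemma rk_mono:
  assumes "S \<subseteq> T" "T \<subseteq> carrier_vec n" "finite T"
  shows "rk S \<le> rk T"
proof -
  have fS: "finite S" using assms finite_subset by auto
  obtain U where U: "finite U" "maximal U (\<lambda>X. X \<subseteq> S \<and> lin_indpt X)" using obtain_max[OF fS] by blast
  have "U \<subseteq> T" "lin_indpt U" using U assms(1) unfolding maximal_def by auto
  then obtain U' where U': "finite U'" "maximal U' (\<lambda>X. X \<subseteq> T \<and> lin_indpt X)" "U \<subseteq> U'"
    using exists_max[OF assms(3)] by blast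
  have "rk S = card U" using rk_max[OF _ fS U(2)] assms by auto
  also have "\<dots> \<le> card U'" using U' card_mono by auto
  also have "\<dots> = rk T" using rk_max[OF assms(2,3) U'(2)] by simp
  finally show ?thesis .
qed

lemma rk_submod:
  assumes "S \<subseteq> carrier_vec n" "T \<subseteq> carrier_vec n" "finite S" "finite T"
  shows "rk (S \<union> T) + rk (S \<inter> T) \<le> rk S + rk T"
proof -
  have fI: "finite (S \<inter> T)" using assms by auto
  obtain B0 where B0: "finite B0" "maximal B0 (\<lambda>X. X \<subseteq> S \<inter> T \<and> lin_indpt X)" using obtain_max[OF fI] by blast
  have B0i: "B0 \<subseteq> S \<inter> T" "lin_indpt B0" using B0 unfolding maximal_def by auto
  obtain BS where BS: "finite BS" "maximal BS (\<lambda>X. X \<subseteq> S \<and> lin_indpt X)" "B0 \<subseteq> BS"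
    using exists_max[OF assms(3), of B0] B0i by blast
  obtain BT where BT: "finite BT" "maximal BT (\<lambda>X. X \<subseteq> T \<and> lin_indpt X)" "B0 \<subseteq> BT"
    using exists_max[OF assms(4), of B0] B0i by blast
  have BSi: "BS \<subseteq> S" "lin_indpt BS" using BS unfolding maximal_def by auto
  have BTi: "BT \<subseteq> T" "lin_indpt BT" using BT unfolding maximal_def by auto
  have "lin_indpt (BS \<inter> BT)" using subset_li_is_li[OF BSi(2)] by auto
  have sub1: "B0 \<subseteq> BS \<inter> BT" using BS(3) BT(3) by auto
  have sub2: "BS \<inter> BT \<subseteq> S \<inter> T" using BSi BTi by auto
  from B0(2) have mx: "\<forall>s. (s \<subseteq> S \<inter> T \<and> lin_indpt s) \<and> B0 \<subseteq> s \<longrightarrow> s = B0" unfolding maximal_def by auto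
  have int: "BS \<inter> BT = B0" using mx sub1 sub2 \<open>lin_indpt (BS \<inter> BT)\<close> by auto
  have Uc: "S \<union> T \<subseteq> carrier_vec n" using assms by auto
  have BUc: "BS \<union> BT \<subseteq> carrier_vec n" using BSi BTi assms by auto
  have "S \<subseteq> span BS" using max_spans[OF assms(1,3) BS(2)] .
  moreover have "span BS \<subseteq> span (BS \<union> BT)" using span_is_monotone by auto
  moreover have "T \<subseteq> span BT" using max_spans[OF assms(2,4) BT(2)] .
  moreover have "span BT \<subseteq> span (BS \<union> BT)" using span_is_monotone by auto
  ultimately have "S \<union> T \<subseteq> span (BS \<union> BT)" by blast
  hence "span (S \<union> T) \<subseteq> span (BS \<union> BT)"
    using span_is_subset[OF _ span_is_submodule[OF BUc]] by auto
  moreover have "span (BS \<union> BT) \<subseteq> span (S \<union> T)" using span_is_monotone BSi BTi by (meson Un_mono)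
  ultimately have speq: "span (S \<union> T) = span (BS \<union> BT)" by auto
  have fU: "finite (BS \<union> BT)" using BS BT by auto
  obtain U where U: "finite U" "maximal U (\<lambda>X. X \<subseteq> BS \<union> BT \<and> lin_indpt X)" using obtain_max[OF fU] by blast
  have "rk (S \<union> T) = rk (BS \<union> BT)" by (simp only: speq)
  also have "\<dots> = card U" using rk_max[OF BUc fU U(2)] .
  also have "\<dots> \<le> card (BS \<union> BT)" using U(2) fU unfolding maximal_def by (meson card_mono)
  finally have 1: "rk (S \<union> T) \<le> card (BS \<union> BT)" .
  have 2: "card (BS \<union> BT) + card B0 = card BS + card BT"
    using card_Un_Int[OF BS(1) BT(1)] int by simp
  have 3: "rk (S \<inter> T) = card B0" using rk_max[OF _ fI B0(2)] assms by auto
  have 4: "rk S = card BS" using rk_max[OF assms(1,3) BS(2)] .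
  have 5: "rk T = card BT" using rk_max[OF assms(2,4) BT(2)] .
  show ?thesis using 1 2 3 4 5 by linarith
qed

lemma rk_eq_span:
  assumes "S \<subseteq> T" "T \<subseteq> carrier_vec n" "finite T" "rk S = rk T"
  shows "T \<subseteq> span S"
proof -
  have fS: "finite S" using assms finite_subset by auto
  obtain U where U: "finite U" "maximal U (\<lambda>X. X \<subseteq> S \<and> lin_indpt X)" using obtain_max[OF fS] by blast
  have "U \<subseteq> T" "lin_indpt U" using U assms(1) unfolding maximal_def by auto
  then obtain U' where U': "finite U'" "maximal U' (\<lambda>X. X \<subseteq> T \<and> lin_indpt X)" "U \<subseteq> U'"
    using exists_max[OF assms(3)] by blast
  have "card U = card U'" using rk_max[OF _ fS U(2)] rk_max[OF assms(2,3) U'(2)] assms by auto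
  hence "U = U'" using card_subset_eq[OF U'(1) U'(3)] by simp
  hence "T \<subseteq> span U" using max_spans[OF assms(2,3) U'(2)] by simp
  moreover have "span U \<subseteq> span S" using span_is_monotone U(2) unfolding maximal_def by auto
  ultimately show ?thesis by auto
qed

lemma span_rk_eq:
  assumes "S \<subseteq> T" "T \<subseteq> carrier_vec n" "T \<subseteq> span S"
  shows "rk S = rk T"
proof -
  have Sc: "S \<subseteq> carrier_vec n" using assms by auto
  have "span T \<subseteq> span S" using span_is_subset[OF assms(3) span_is_submodule[OF Sc]] by auto
  moreover have "span S \<subseteq> span T" using span_is_monotone assms by auto
  ultimately show ?thesis by simp
qed

lemma rk_full:
  assumes "set (unit_vecs n) \<subseteq> S" "S \<subseteq> carrier_vec n"
  shows "rk S = n"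
proof -
  have "carrier_vec n \<subseteq> span S"
    using span_is_monotone[OF assms(1)] span_unit_vecs_is_carrier by auto
  hence "span S = carrier_vec n" using span_is_subset2[OF assms(2)] by auto
  hence "span_vs S = V\<lparr>carrier := carrier V\<rparr>" by simp
  hence "span_vs S = V" by simp
  thus ?thesis using dim_is_n by simp
qed

end


context vec_space begin

lemma extend_full:
  assumes "B \<subseteq> carrier_vec n" "finite B" "lin_indpt B"
  obtains C where "B \<subseteq> C" "C \<subseteq> carrier_vec n" "finite C" "lin_indpt C" "card C = n"
proof -
  let ?S = "B \<union> set (unit_vecs n)"
  have uc: "set (unit_vecs n) \<subseteq> carrier_vec n" unfolding unit_vecs_def by auto
  have fS: "finite ?S" using assms by auto
  have Sc: "?S \<subseteq> carrier_vec n" using assms uc by auto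
  obtain C where C: "finite C" "maximal C (\<lambda>T. T \<subseteq> ?S \<and> lin_indpt T)" "B \<subseteq> C"
    using exists_max[OF fS, of B] assms by auto
  have "card C = n" using rk_max[OF Sc fS C(2)] rk_full[of ?S] Sc by auto
  moreover have "C \<subseteq> carrier_vec n" "lin_indpt C" using C(2) Sc unfolding maximal_def by auto
  ultimately show ?thesis using that C by auto
qed

lemma duality:
  assumes W: "W \<subseteq> carrier_vec n" "finite W" and v: "v \<in> carrier_vec n"
    and H: "\<And>X. X \<in> carrier_vec n \<Longrightarrow> (\<forall>w\<in>W. X \<bullet> w = 0) \<Longrightarrow> X \<bullet> v = 0"
  shows "v \<in> span W"
proof (rule ccontr)
  assume nv: "v \<notin> span W"
  obtain B0 where B0: "finite B0" "maximal B0 (\<lambda>X. X \<subseteq> W \<and> lin_indpt X)" using obtain_max[OF W(2)] by blast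
  have B0i: "B0 \<subseteq> W" "lin_indpt B0" using B0 unfolding maximal_def by auto
  have B0c: "B0 \<subseteq> carrier_vec n" using B0i W by auto
  have WB: "W \<subseteq> span B0" using max_spans[OF W B0(2)] .
  have "span B0 \<subseteq> span W" using span_is_monotone B0i by auto
  hence nv0: "v \<notin> span B0" using nv by auto
  hence vB: "v \<notin> B0" using span_mem[OF B0c] by auto
  have li: "lin_indpt (B0 \<union> {v})" using lin_dep_iff_in_span[OF B0c B0i(2) v vB] nv0 by auto
  obtain C where C: "B0 \<union> {v} \<subseteq> C" "C \<subseteq> carrier_vec n" "finite C" "lin_indpt C" "card C = n"
    using extend_full[of "B0 \<union> {v}"] li B0c v B0(1) by auto
  obtain xs where xs: "set xs = C" "distinct xs" using finite_distinct_list[OF C(3)] by auto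
  have len: "length xs = n" using xs C(5) distinct_card by fastforce
  define M where "M = mat_of_cols n xs"
  have M: "M \<in> carrier_mat n n" unfolding M_def using len by auto
  have cM: "cols M = xs" unfolding M_def using xs C(2) by auto
  have "rank M = n" using lin_indpt_full_rank[OF M] cM xs C(4) by auto
  hence "det M \<noteq> 0" using det_rank_iff[OF M] by auto
  hence "det (transpose_mat M) \<noteq> 0" using det_transpose[OF M] by simp
  from det_non_zero_imp_unit[OF _ this, of n "()"] M
  obtain Q where Q: "Q \<in> carrier_mat n n" "transpose_mat M * Q = 1\<^sub>m n"
    unfolding Units_def ring_mat_def by auto
  obtain j where j: "j < n" "xs ! j = v" using C(1) xs len by (metis Un_subset_iff in_set_conv_nth insert_subset )
  define X where "X = Q *\<^sub>v unit_vec n j"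
  have Xc: "X \<in> carrier_vec n" unfolding X_def using Q by auto
  have "transpose_mat M *\<^sub>v X = unit_vec n j"
    unfolding X_def using Q M by (simp add: assoc_mult_mat_vec[symmetric, of _ n n _ n])
  hence ent: "i < n \<Longrightarrow> xs ! i \<bullet> X = (if i = j then 1 else 0)" for i
  proof -
    assume e: "transpose_mat M *\<^sub>v X = unit_vec n j" and i: "i < n"
    have "(transpose_mat M *\<^sub>v X) $ i = row (transpose_mat M) i \<bullet> X" using M i by simp
    also have "row (transpose_mat M) i = col M i" using M i by simp
    also have "col M i = xs ! i" using cM M i cols_nth[of i M] by simp
    finally have "xs ! i \<bullet> X = unit_vec n j $ i" using e by simp
    thus ?thesis using i j(1) by simp
  qed
  have "X \<in> orthogonal_complement B0"
    unfolding orthogonal_complement_def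
  proof (intro CollectI conjI ballI Xc)
    fix b assume b: "b \<in> B0"
    then obtain i where i: "i < n" "xs ! i = b" using C(1) xs len by (metis UnCI in_set_conv_nth subset_iff)
    have "i \<noteq> j" using i j b vB by auto
    hence "b \<bullet> X = 0" using ent i by auto
    thus "X \<bullet> b = 0" using comm_scalar_prod[OF Xc] b B0c by auto
  qed
  hence "X \<in> orthogonal_complement (span B0)" using in_orthogonal_complement_span[OF B0c] by simp
  hence "\<forall>w\<in>W. X \<bullet> w = 0" using WB unfolding orthogonal_complement_def by auto
  hence "X \<bullet> v = 0" using H Xc by auto
  moreover have "v \<bullet> X = 1" using ent[OF j(1)] j by simp
  ultimately show False using comm_scalar_prod[OF Xc v] by simp
qed

end


lemma hcat_dims[simp]: "dim_row (hcat A B) = dim_row A" "dim_col (hcat A B) = dim_col A + dim_col B"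
  unfolding hcat_def by auto

lemma col_hcat: assumes "dim_row B = dim_row A" "j < dim_col A + dim_col B"
  shows "col (hcat A B) j = (if j < dim_col A then col A j else col B (j - dim_col A))"
  using assms unfolding hcat_def by (auto intro!: eq_vecI)

lemma set_cols_conv: "set (cols A) = {col A j | j. j < dim_col A}"
  unfolding cols_def by auto

lemma cols_hcat_list: assumes "dim_row B = dim_row A"
  shows "cols (hcat A B) = cols A @ cols B"
proof (rule nth_equalityI)
  show "length (cols (hcat A B)) = length (cols A @ cols B)" by simp
  fix j assume "j < length (cols (hcat A B))"
  hence j: "j < dim_col A + dim_col B" by simp
  show "cols (hcat A B) ! j = (cols A @ cols B) ! j"
    using col_hcat[OF assms j] j by (simp add: nth_append)
qed

lemma cols_hcat: assumes "dim_row B = dim_row A"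
  shows "set (cols (hcat A B)) = set (cols A) \<union> set (cols B)"
  using cols_hcat_list[OF assms] by simp

lemma hcat_list_props0:
  assumes "\<forall>A\<in>set As. dim_row A = r"
  shows "dim_row (hcat_list r As) = r \<and>
    dim_col (hcat_list r As) = sum_list (map dim_col As) \<and>
    set (cols (hcat_list r As)) = (\<Union>A\<in>set As. set (cols A))"
  using assms
proof (induction As)
  case Nil
  thus ?case unfolding hcat_list_def cols_def by simp
next
  case (Cons A As)
  have r: "dim_row (hcat_list r As) = r" using Cons by auto
  have h: "hcat_list r (A # As) = hcat A (hcat_list r As)" unfolding hcat_list_def by simp
  show ?case using h Cons cols_hcat[of "hcat_list r As" A] r by simp
qed

lemma hcat_list_props:
  assumes "\<forall>A\<in>set As. dim_row A = r"
  shows "dim_row (hcat_list r As) = r"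
    "dim_col (hcat_list r As) = sum_list (map dim_col As)"
    "set (cols (hcat_list r As)) = (\<Union>A\<in>set As. set (cols A))"
  using hcat_list_props0[OF assms] by auto

lemma hcat_list_carrier:
  assumes "\<forall>A\<in>set As. A \<in> carrier_mat r (c A)"
  shows "hcat_list r As \<in> carrier_mat r (sum_list (map c As))"
proof -
  have 1: "\<forall>A\<in>set As. dim_row A = r" using assms carrier_matD(1) by blast
  have 2: "map dim_col As = map c As" unfolding map_eq_conv using assms carrier_matD(2) by blast
  show ?thesis using hcat_list_props(1,2)[OF 1] 2 by (intro carrier_matI) simp_all
qed


lemma mrank_rk: "mrank (M::'a::field mat) = vec_space.rk (dim_row M) (set (cols M))"
  unfolding mrank_def vec_space.rank_def by simp

lemma vmult_index: "j < dim_col M \<Longrightarrow> vmult X M $ j = col M j \<bullet> X"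
  unfolding vmult_def by simp

lemma vmult_dim[simp]: "dim_vec (vmult X M) = dim_col M"
  unfolding vmult_def by simp

lemma col_in_cols: "j < dim_col M \<Longrightarrow> col M j \<in> set (cols M)"
  unfolding set_cols_conv by auto

lemma vmult_eq_iff:
  fixes X Y :: "'a::comm_semiring_0 vec"
  shows "vmult X M = vmult Y M \<longleftrightarrow> (\<forall>c\<in>set (cols M). c \<bullet> X = c \<bullet> Y)"
proof
  assume e: "vmult X M = vmult Y M"
  show "\<forall>c\<in>set (cols M). c \<bullet> X = c \<bullet> Y"
  proof
    fix c assume "c \<in> set (cols M)"
    then obtain j where j: "j < dim_col M" "c = col M j" unfolding set_cols_conv by auto
    show "c \<bullet> X = c \<bullet> Y" using vmult_index[OF j(1), of X] vmult_index[OF j(1), of Y] e j(2) by simp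
  qed
next
  assume h: "\<forall>c\<in>set (cols M). c \<bullet> X = c \<bullet> Y"
  show "vmult X M = vmult Y M"
  proof (rule eq_vecI)
    fix j assume "j < dim_vec (vmult Y M)"
    hence j: "j < dim_col M" by simp
    show "vmult X M $ j = vmult Y M $ j" using vmult_index[OF j, of X] vmult_index[OF j, of Y] h col_in_cols[OF j] by simp
  qed simp
qed



lemma rho_rk:
  fixes A :: "nat \<Rightarrow> 'a::field mat"
  assumes "\<forall>i\<in>E. dim_row (A i) = N" "finite E" "S \<subseteq> E"
  shows "mrank (hcat_list N (map A (sorted_list_of_set S))) = vec_space.rk N (\<Union>i\<in>S. set (cols (A i)))"
proof -
  have fS: "finite S" using assms finite_subset by auto
  have ss: "set (sorted_list_of_set S) = S" using fS by simp
  have st: "set (map A (sorted_list_of_set S)) = A ` S" using ss by simp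
  have d: "\<forall>M\<in>set (map A (sorted_list_of_set S)). dim_row M = N" using st assms by auto
  show ?thesis using hcat_list_props(1,3)[OF d] st ss mrank_rk[of "hcat_list N (map A (sorted_list_of_set S))"] by simp
qed

lemma cs_carrier:
  fixes A :: "nat \<Rightarrow> 'a::field mat"
  assumes "\<forall>i\<in>E. dim_row (A i) = N" "S \<subseteq> E"
  shows "(\<Union>i\<in>S. set (cols (A i))) \<subseteq> carrier_vec N"
  using assms cols_dim by fastforce

lemma poly:
  fixes A :: "nat \<Rightarrow> 'a::field mat"
  assumes dA: "\<forall>i\<in>E. dim_row (A i) = N" and fE: "finite E"
  shows "discrete_polymatroid E (\<lambda>S. mrank (hcat_list N (map A (sorted_list_of_set S))))"
proof -
  let ?cs = "\<lambda>S. \<Union>i\<in>S. set (cols (A i))"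
  have fcs: "finite (?cs S)" if "S \<subseteq> E" for S using that fE finite_subset by blast
  have r: "mrank (hcat_list N (map A (sorted_list_of_set S))) = vec_space.rk N (?cs S)" if "S \<subseteq> E" for S
    using rho_rk[OF dA fE that] .
  show ?thesis unfolding discrete_polymatroid_def
  proof (intro conjI allI impI)
    show "mrank (hcat_list N (map A (sorted_list_of_set {}))) = 0"
      using r[of "{}"] vec_space.dim_zero_vs[of N] by simp
  next
    fix X Y assume XY: "X \<subseteq> Y \<and> Y \<subseteq> E"
    have "?cs X \<subseteq> ?cs Y" using XY by auto
    thus "mrank (hcat_list N (map A (sorted_list_of_set X))) \<le> mrank (hcat_list N (map A (sorted_list_of_set Y)))"
      using r[of X] r[of Y] XY vec_space.rk_mono[of "?cs X" "?cs Y" N] cs_carrier[OF dA, of Y] fcs[of Y] by auto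
  next
    fix X Y assume XY: "X \<subseteq> E \<and> Y \<subseteq> E"
    have cX: "?cs X \<subseteq> carrier_vec N" "finite (?cs X)" using cs_carrier[OF dA] fcs XY by auto
    have cY: "?cs Y \<subseteq> carrier_vec N" "finite (?cs Y)" using cs_carrier[OF dA] fcs XY by auto
    have u: "?cs (X \<union> Y) = ?cs X \<union> ?cs Y" by auto
    have i: "?cs (X \<inter> Y) \<subseteq> ?cs X \<inter> ?cs Y" by auto
    have "vec_space.rk N (?cs (X \<inter> Y)) \<le> vec_space.rk N (?cs X \<inter> ?cs Y)"
      using vec_space.rk_mono[OF i] cX by auto
    moreover have "vec_space.rk N (?cs X \<union> ?cs Y) + vec_space.rk N (?cs X \<inter> ?cs Y) \<le> vec_space.rk N (?cs X) + vec_space.rk N (?cs Y)"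
      using vec_space.rk_submod cX cY by blast
    moreover have "X \<union> Y \<subseteq> E" "X \<inter> Y \<subseteq> E" using XY by auto
    ultimately show "mrank (hcat_list N (map A (sorted_list_of_set (X \<union> Y)))) + mrank (hcat_list N (map A (sorted_list_of_set (X \<inter> Y))))
         \<le> mrank (hcat_list N (map A (sorted_list_of_set X))) + mrank (hcat_list N (map A (sorted_list_of_set Y)))"
      using r[of "X \<union> Y"] r[of "X \<inter> Y"] r[of X] r[of Y] XY u by simp
  qed
qed



lemma key_transform:
  fixes AA B :: "'a::field mat"
  assumes "AA \<in> carrier_mat N N" "B \<in> carrier_mat N N" "B * AA = 1\<^sub>m N" "Z \<in> carrier_vec N" "c \<in> carrier_vec N"
  shows "(transpose_mat B *\<^sub>v Z) \<bullet> (AA *\<^sub>v c) = c \<bullet> Z"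
proof -
  let ?W = "transpose_mat B *\<^sub>v Z"
  have Wc: "?W \<in> carrier_vec N" using assms by auto
  have "transpose_mat AA *\<^sub>v ?W = (transpose_mat AA * transpose_mat B) *\<^sub>v Z"
    using assms by (simp add: assoc_mult_mat_vec[of _ N N _ N])
  also have "transpose_mat AA * transpose_mat B = transpose_mat (B * AA)"
    using transpose_mult[of B N N AA N] assms(1,2) by simp
  also have "\<dots> = 1\<^sub>m N" using assms(3) by simp
  finally have e: "transpose_mat AA *\<^sub>v ?W = Z" using assms by simp
  have "?W \<bullet> (AA *\<^sub>v c) = (transpose_mat AA *\<^sub>v ?W) \<bullet> c"
    using transpose_vec_mult_scalar[OF assms(1) assms(5) Wc] by simp
  also have "\<dots> = Z \<bullet> c" using e by simp
  also have "\<dots> = c \<bullet> Z" using comm_scalar_prod assms by blast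
  finally show ?thesis .
qed

lemma cols_mult_image:
  fixes AA M :: "'a::field mat"
  assumes "AA \<in> carrier_mat N N" "M \<in> carrier_mat N k"
  shows "set (cols (AA * M)) = (\<lambda>c. AA *\<^sub>v c) ` set (cols M)"
proof -
  have "set (cols (AA * M)) = {col (AA * M) j | j. j < k}" unfolding set_cols_conv using assms by simp
  also have "\<dots> = {AA *\<^sub>v col M j | j. j < k}" using col_mult2[OF assms] by metis
  also have "\<dots> = (\<lambda>c. AA *\<^sub>v c) ` {col M j | j. j < k}" by auto
  finally show ?thesis unfolding set_cols_conv using assms by simp
qed


lemma decode_from_kernel:
  fixes K D L :: "'a::field mat"
  assumes dK: "dim_row K = N" and dD: "dim_row D = N" and dL: "dim_row L = N"
    and ker: "\<And>Z. Z \<in> carrier_vec N \<Longrightarrow> (\<forall>c\<in>set (cols K). c \<bullet> Z = 0) \<Longrightarrow> (\<forall>c\<in>set (cols L). c \<bullet> Z = 0) \<Longrightarrow> (\<forall>d\<in>set (cols D). d \<bullet> Z = 0)"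
  shows "\<exists>\<psi>. \<forall>X\<in>carrier_vec N. \<psi> (vmult X K) (vmult X L) = vmult X D"
proof (intro exI ballI)
  fix X :: "'a vec" assume X: "X \<in> carrier_vec N"
  let ?P = "\<lambda>Y. Y \<in> carrier_vec N \<and> vmult Y K = vmult X K \<and> vmult Y L = vmult X L"
  define Y where "Y = (SOME Y. ?P Y)"
  have PY: "?P Y" unfolding Y_def by (rule someI[of ?P X]) (use X in auto)
  hence Yc: "Y \<in> carrier_vec N" by auto
  have diff: "c \<in> carrier_vec N \<Longrightarrow> c \<bullet> (X - Y) = c \<bullet> X - c \<bullet> Y" for c
    using scalar_prod_minus_distrib[OF _ X Yc] by blast
  have "\<forall>d\<in>set (cols D). d \<bullet> (X - Y) = 0"
  proof (rule ker)
    show "X - Y \<in> carrier_vec N" using X Yc by simp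
    show "\<forall>c\<in>set (cols K). c \<bullet> (X - Y) = 0"
      using PY vmult_eq_iff[of Y K X] diff cols_dim[of K] dK by auto
    show "\<forall>c\<in>set (cols L). c \<bullet> (X - Y) = 0"
      using PY vmult_eq_iff[of Y L X] diff cols_dim[of L] dL by auto
  qed
  hence "\<forall>d\<in>set (cols D). d \<bullet> X = d \<bullet> Y"
  proof (intro ballI)
    fix d assume h: "\<forall>d\<in>set (cols D). d \<bullet> (X - Y) = 0" and d: "d \<in> set (cols D)"
    have "d \<in> carrier_vec N" using d cols_dim[of D] dD by auto
    thus "d \<bullet> X = d \<bullet> Y" using h d diff by fastforce
  qed
  hence "vmult Y D = vmult X D" using vmult_eq_iff[of Y D X] by auto
  thus "(\<lambda>a b. vmult (SOME Y. Y \<in> carrier_vec N \<and> vmult Y K = a \<and> vmult Y L = b) D) (vmult X K) (vmult X L) = vmult X D"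
    unfolding Y_def by simp
qed


context vec_space begin

lemma back_core:
  assumes AA: "AA \<in> carrier_mat n n" and B: "B \<in> carrier_mat n n" and BA: "B * AA = 1\<^sub>m n"
    and A': "A' = AA * L" and L: "L \<in> carrier_mat n l"
    and K: "K \<in> carrier_mat n kK" and D: "D \<in> carrier_mat n kD"
    and rkeq: "rk (set (cols (AA * D)) \<union> (set (cols (AA * K)) \<union> set (cols A'))) = rk (set (cols (AA * K)) \<union> set (cols A'))"
    and Z: "Z \<in> carrier_vec n" and ZK: "\<forall>c\<in>set (cols K). c \<bullet> Z = 0" and ZL: "\<forall>c\<in>set (cols L). c \<bullet> Z = 0"
  shows "\<forall>d\<in>set (cols D). d \<bullet> Z = 0"
proof
  fix d assume d: "d \<in> set (cols D)"
  let ?S = "set (cols (AA * K)) \<union> set (cols A')"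
  let ?T = "set (cols (AA * D)) \<union> ?S"
  have AKc: "AA * K \<in> carrier_mat n kK" using AA K by simp
  have ADc: "AA * D \<in> carrier_mat n kD" using AA D by simp
  have A'c: "A' \<in> carrier_mat n l" using AA L A' by simp
  have Tc: "?T \<subseteq> carrier_vec n" using cols_dim[of "AA * K"] cols_dim[of "AA * D"] cols_dim[of A'] AKc ADc A'c AA by auto
  have Sc: "?S \<subseteq> carrier_vec n" using Tc by auto
  have TS: "?T \<subseteq> span ?S" using rk_eq_span[of ?S ?T] Tc rkeq by auto
  define W where "W = transpose_mat B *\<^sub>v Z"
  have Wc: "W \<in> carrier_vec n" unfolding W_def using B Z by simp
  have kt: "c \<in> carrier_vec n \<Longrightarrow> W \<bullet> (AA *\<^sub>v c) = c \<bullet> Z" for c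
    unfolding W_def using key_transform[OF AA B BA Z] by blast
  have "W \<in> orthogonal_complement ?S"
    unfolding orthogonal_complement_def
  proof (intro CollectI conjI Wc ballI)
    fix s assume s: "s \<in> ?S"
    show "W \<bullet> s = 0"
    proof (cases "s \<in> set (cols (AA * K))")
      case True
      then obtain c where c: "c \<in> set (cols K)" "s = AA *\<^sub>v c" using cols_mult_image[OF AA K] by auto
      have "c \<in> carrier_vec n" using c cols_dim[of K] K by auto
      thus ?thesis using kt c ZK by auto
    next
      case False
      hence "s \<in> set (cols (AA * L))" using s A' by auto
      then obtain c where c: "c \<in> set (cols L)" "s = AA *\<^sub>v c" using cols_mult_image[OF AA L] by auto
      have "c \<in> carrier_vec n" using c cols_dim[of L] L by auto
      thus ?thesis using kt c ZL by auto
    qed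
  qed
  hence "W \<in> orthogonal_complement (span ?S)" using in_orthogonal_complement_span[OF Sc] by simp
  moreover have "AA *\<^sub>v d \<in> span ?S" using TS d cols_mult_image[OF AA D] by auto
  ultimately have "W \<bullet> (AA *\<^sub>v d) = 0" unfolding orthogonal_complement_def by auto
  moreover have "d \<in> carrier_vec n" using d cols_dim[of D] D by auto
  ultimately show "d \<bullet> Z = 0" using kt by simp
qed

end



lemma sl_1m: "sorted_list_of_set {1..m} = [1..<m+1]"
proof -
  have "{1..m} = {1..<m+1}" by auto
  thus ?thesis by simp
qed

lemma dir_back:
  fixes R :: "('a::field mat \<times> 'a mat) list" and A :: "nat \<Rightarrow> 'a mat"
  assumes wf: "wf_receivers m n R"
  and rep: "representation_matrices {1..m+1} \<rho> A"
  and rE: "\<rho> {1..m+1} = m*n" and ri: "\<forall>i\<in>{1..m}. \<rho> {i} = n" and rm: "\<rho> {1..m} = m*n" and rl: "\<rho> {m+1} = l"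
  and C2: "\<forall>(K,D)\<in>set R. let AA = hcat_list (m*n) (map A [1..<m+1]) in
          mrank (hcat_list (m*n) [AA * D, AA * K, A (m+1)]) = mrank (hcat_list (m*n) [AA * K, A (m+1)])"
  shows "\<exists>L. linear_index_code m n R l L"
proof -
  define N where "N = m*n"
  have Acar: "A i \<in> carrier_mat N (\<rho> {i})" if "i \<in> {1..m+1}" for i
    using rep that rE unfolding representation_matrices_def N_def by auto
  have rk: "mrank (hcat_list N (map A (sorted_list_of_set S))) = \<rho> S" if "S \<subseteq> {1..m+1}" for S
    using rep that rE unfolding representation_matrices_def N_def by auto
  define AA where "AA = hcat_list N (map A [1..<m+1])"
  have AAr: "mrank AA = N" using rk[of "{1..m}"] rm sl_1m unfolding AA_def N_def by auto
  have mc: "\<forall>M\<in>set (map A [1..<m+1]). M \<in> carrier_mat N (dim_col M)"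
  proof
    fix M assume "M \<in> set (map A [1..<m+1])"
    then obtain i where i0: "i \<in> set [1..<m+1]" "M = A i" by auto
    hence i: "i \<in> {1..m+1}" "M = A i" by auto
    hence "dim_row M = N" using Acar[OF i(1)] by simp
    thus "M \<in> carrier_mat N (dim_col M)" by (intro carrier_matI) simp_all
  qed
  have "map dim_col (map A [1..<m+1]) = map (\<lambda>i. n) [1..<m+1]"
    unfolding map_map map_eq_conv
  proof
    fix i assume "i \<in> set [1..<m+1]"
    hence i: "i \<in> {1..m+1}" "i \<in> {1..m}" by auto
    show "(dim_col \<circ> A) i = n" using Acar[OF i(1)] ri i(2) by simp
  qed
  hence "sum_list (map dim_col (map A [1..<m+1])) = N" unfolding N_def by (simp add: map_replicate_const sum_list_replicate)
  hence AAc: "AA \<in> carrier_mat N N" using hcat_list_carrier[OF mc] unfolding AA_def by simp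
  have "vec_space.rank N AA = N" using AAr AAc unfolding mrank_def by auto
  hence "det AA \<noteq> 0" using vec_space.det_rank_iff[OF AAc] by simp
  from det_non_zero_imp_unit[OF AAc this, of "()"]
  obtain B where B: "B \<in> carrier_mat N N" "B * AA = 1\<^sub>m N" "AA * B = 1\<^sub>m N"
    unfolding Units_def ring_mat_def by auto
  define A' where "A' = A (m+1)"
  have A'c: "A' \<in> carrier_mat N l" using Acar[of "m+1"] rl unfolding A'_def by auto
  define L where "L = B * A'"
  have Lc: "L \<in> carrier_mat N l" unfolding L_def using B A'c by simp
  have "AA * L = (AA * B) * A'" unfolding L_def using assoc_mult_mat[OF AAc B(1) A'c] by simp
  also have "\<dots> = A'" using B(3) A'c by simp
  finally have AAL: "A' = AA * L" by simp
  show ?thesis unfolding linear_index_code_def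
  proof (intro exI[of _ L] conjI)
    show "L \<in> carrier_mat (m * n) l" using Lc N_def by simp
    show "\<forall>(K, D)\<in>set R. \<exists>\<psi>. \<forall>X\<in>carrier_vec (m * n). \<psi> (vmult X K) (vmult X L) = vmult X D"
    proof (intro ballI, clarify)
      fix K D assume KD: "(K, D) \<in> set R"
      have dK: "dim_row K = N" and dD: "dim_row D = N" using wf KD unfolding wf_receivers_def N_def by auto
      have Kc: "K \<in> carrier_mat N (dim_col K)" and Dc: "D \<in> carrier_mat N (dim_col D)" using dK dD by auto
      have c2: "mrank (hcat_list N [AA * D, AA * K, A']) = mrank (hcat_list N [AA * K, A'])"
        using C2 KD unfolding AA_def A'_def N_def Let_def by auto
      have d3: "\<forall>M\<in>set [AA * D, AA * K, A']. dim_row M = N" using AAc A'c by auto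
      have d2: "\<forall>M\<in>set [AA * K, A']. dim_row M = N" using AAc A'c by auto
      have "vec_space.rk N (set (cols (AA * D)) \<union> (set (cols (AA * K)) \<union> set (cols A'))) = vec_space.rk N (set (cols (AA * K)) \<union> set (cols A'))"
        using c2 mrank_rk[of "hcat_list N [AA * D, AA * K, A']"] mrank_rk[of "hcat_list N [AA * K, A']"]
          hcat_list_props(1,3)[OF d3] hcat_list_props(1,3)[OF d2] by simp
      note core = vec_space.back_core[OF AAc B(1,2) AAL Lc Kc Dc this]
      have "\<exists>\<psi>. \<forall>X\<in>carrier_vec N. \<psi> (vmult X K) (vmult X L) = vmult X D"
      proof (rule decode_from_kernel[OF dK dD])
        show "dim_row L = N" using Lc by simp
        fix Z assume "Z \<in> carrier_vec N" "\<forall>c\<in>set (cols K). c \<bullet> Z = 0" "\<forall>c\<in>set (cols L). c \<bullet> Z = 0"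
        thus "\<forall>d\<in>set (cols D). d \<bullet> Z = 0" by (rule core)
      qed
      thus "\<exists>\<psi>. \<forall>X\<in>carrier_vec (m * n). \<psi> (vmult X K) (vmult X L) = vmult X D" unfolding N_def .
    qed
  qed
qed



context vec_space begin

lemma extend_cols:
  assumes L: "L \<in> carrier_mat n l" and ln: "l \<le> n"
  obtains L' where "L' \<in> carrier_mat n l" "distinct (cols L')" "lin_indpt (set (cols L'))"
    "set (cols L) \<subseteq> span (set (cols L'))"
proof -
  have Lc: "set (cols L) \<subseteq> carrier_vec n" using cols_dim[of L] L by auto
  obtain B0 where B0: "finite B0" "maximal B0 (\<lambda>X. X \<subseteq> set (cols L) \<and> lin_indpt X)"
    using obtain_max[of "set (cols L)"] by auto
  have B0i: "B0 \<subseteq> set (cols L)" "lin_indpt B0" using B0 unfolding maximal_def by auto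
  have B0c: "B0 \<subseteq> carrier_vec n" using B0i Lc by auto
  have "card B0 \<le> card (set (cols L))" using B0i(1) card_mono by blast
  also have "\<dots> \<le> length (cols L)" by (rule card_length)
  finally have cB0: "card B0 \<le> l" using L by simp
  obtain C where C: "B0 \<subseteq> C" "C \<subseteq> carrier_vec n" "finite C" "lin_indpt C" "card C = n"
    using extend_full[OF B0c B0(1) B0i(2)] by blast
  have "card (C - B0) = n - card B0" using card_Diff_subset[OF B0(1) C(1)] C(5) by simp
  hence "l - card B0 \<le> card (C - B0)" using ln by simp
  then obtain C0 where C0: "C0 \<subseteq> C - B0" "card C0 = l - card B0" "finite C0"
    using obtain_subset_with_card_n by metis
  define C' where "C' = B0 \<union> C0"
  have cC': "card C' = l" unfolding C'_def using card_Un_disjoint[OF B0(1) C0(3)] C0 cB0 by auto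
  have C'C: "C' \<subseteq> C" unfolding C'_def using C0 C(1) by auto
  have C'i: "lin_indpt C'" using subset_li_is_li[OF C(4) C'C] .
  have fC': "finite C'" using C'C C(3) finite_subset by blast
  obtain xs where xs: "set xs = C'" "distinct xs" using finite_distinct_list[OF fC'] by auto
  have len: "length xs = l" using xs cC' distinct_card by fastforce
  define L' where "L' = mat_of_cols n xs"
  have xc: "set xs \<subseteq> carrier_vec n" using xs C'C C(2) by auto
  have L'c: "L' \<in> carrier_mat n l" unfolding L'_def using len by auto
  have cL': "cols L' = xs" unfolding L'_def using xc by simp
  have "set (cols L) \<subseteq> span B0" using max_spans[OF Lc _ B0(2)] by simp
  also have "span B0 \<subseteq> span C'" using span_is_monotone unfolding C'_def by auto
  finally have "set (cols L) \<subseteq> span (set (cols L'))" using cL' xs by simp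
  thus ?thesis using that L'c cL' xs C'i by auto
qed

lemma fwd_core:
  assumes K: "K \<in> carrier_mat n kK" and D: "D \<in> carrier_mat n kD" and L: "L \<in> carrier_mat n l"
    and L': "L' \<in> carrier_mat n l'" and sp: "set (cols L) \<subseteq> span (set (cols L'))"
    and dec: "\<forall>X\<in>carrier_vec n. \<psi> (vmult X K) (vmult X L) = vmult X D"
  shows "rk (set (cols D) \<union> (set (cols K) \<union> set (cols L'))) = rk (set (cols K) \<union> set (cols L'))"
proof -
  let ?S = "set (cols K) \<union> set (cols L')"
  have Sc: "?S \<subseteq> carrier_vec n" using cols_dim[of K] cols_dim[of L'] K L' by auto
  have Dc: "set (cols D) \<subseteq> carrier_vec n" using cols_dim[of D] D by auto
  have Lc: "set (cols L) \<subseteq> carrier_vec n" using cols_dim[of L] L by auto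
  have "set (cols D) \<subseteq> span ?S"
  proof
    fix d assume d: "d \<in> set (cols D)"
    show "d \<in> span ?S"
    proof (rule duality[OF Sc _ ])
      show "finite ?S" by simp
      show "d \<in> carrier_vec n" using d Dc by auto
      fix X assume X: "X \<in> carrier_vec n" and XS: "\<forall>w\<in>?S. X \<bullet> w = 0"
      have "X \<in> orthogonal_complement ?S" unfolding orthogonal_complement_def using X XS by auto
      hence "X \<in> orthogonal_complement (span ?S)" using in_orthogonal_complement_span[OF Sc] by simp
      moreover have "set (cols L) \<subseteq> span ?S" using sp span_is_monotone[of "set (cols L')" ?S] by auto
      ultimately have XL: "\<forall>c\<in>set (cols L). X \<bullet> c = 0" unfolding orthogonal_complement_def by auto
      have z: "0\<^sub>v n \<in> carrier_vec n" by simp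
      have eK: "vmult X K = vmult (0\<^sub>v n) K" unfolding vmult_eq_iff
      proof
        fix c assume c: "c \<in> set (cols K)"
        hence cc: "c \<in> carrier_vec n" using Sc by auto
        show "c \<bullet> X = c \<bullet> 0\<^sub>v n" using XS c comm_scalar_prod[OF cc X] cc by simp
      qed
      have eL: "vmult X L = vmult (0\<^sub>v n) L" unfolding vmult_eq_iff
      proof
        fix c assume c: "c \<in> set (cols L)"
        hence cc: "c \<in> carrier_vec n" using Lc by auto
        show "c \<bullet> X = c \<bullet> 0\<^sub>v n" using XL c comm_scalar_prod[OF cc X] cc by simp
      qed
      have "vmult X D = vmult (0\<^sub>v n) D" using dec X z eK eL by metis
      hence "d \<bullet> X = d \<bullet> 0\<^sub>v n" using vmult_eq_iff d by blast
      hence "d \<bullet> X = 0" using d Dc by auto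
      thus "X \<bullet> d = 0" using comm_scalar_prod[OF X, of d] d Dc by auto
    qed
  qed
  moreover have "?S \<subseteq> span ?S" using in_own_span[OF Sc] .
  ultimately have "set (cols D) \<union> ?S \<subseteq> span ?S" by auto
  thus ?thesis using span_rk_eq[of ?S "set (cols D) \<union> ?S"] Sc Dc by auto
qed

end



definition blk :: "nat \<Rightarrow> nat \<Rightarrow> nat \<Rightarrow> 'a::field mat" where
  "blk N n i = mat N n (\<lambda>(r,c). if r = (i-1)*n + c then 1 else 0)"

lemma hcat_blocks:
  assumes "1 \<le> k" "k \<le> m+1"
  shows "hcat_list N (map (blk N n) [k..<m+1]) = (mat N ((m+1-k)*n) (\<lambda>(r,c). if r = (k-1)*n + c then 1 else 0) :: 'a::field mat)"
  using assms
proof (induction "m+1-k" arbitrary: k)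
  case 0
  hence k: "k = m+1" by simp
  show ?case unfolding k hcat_list_def by (rule eq_matI) auto
next
  case (Suc d)
  hence km: "k < m+1" by simp
  have up: "[k..<m+1] = k # [k+1..<m+1]" using km by (simp add: upt_conv_Cons)
  have IH: "hcat_list N (map (blk N n) [k+1..<m+1]) = (mat N ((m+1-(k+1))*n) (\<lambda>(r,c). if r = (k+1-1)*n + c then 1 else 0) :: 'a mat)"
    using Suc.hyps(1)[of "k+1"] Suc.hyps(2) Suc.prems km by simp
  have kn: "k*n = (k-1)*n + n" using Suc(3) by (cases k) auto
  have "m + 1 - k = Suc (m - k)" using km by simp
  hence dc: "n + (m - k) * n = (m + 1 - k) * n" by simp
  show ?case unfolding up list.map hcat_list_def foldr.simps o_def
    unfolding hcat_list_def[symmetric] IH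
  proof (rule eq_matI)
    fix i j assume i: "i < dim_row (mat N ((m + 1 - k) * n) (\<lambda>(r, c). if r = (k - 1) * n + c then 1 else (0::'a)))"
      and j: "j < dim_col (mat N ((m + 1 - k) * n) (\<lambda>(r, c). if r = (k - 1) * n + c then 1 else (0::'a)))"
    have i': "i < N" and j': "j < (m+1-k)*n" using i j by auto
    show "hcat (blk N n k) (mat N ((m + 1 - (k + 1)) * n) (\<lambda>(r, c). if r = (k + 1 - 1) * n + c then 1 else 0)) $$ (i, j) =
          mat N ((m + 1 - k) * n) (\<lambda>(r, c). if r = (k - 1) * n + c then 1 else (0::'a)) $$ (i, j)"
    proof (cases "j < n")
      case True thus ?thesis using i' j' unfolding hcat_def blk_def by simp
    next
      case False
      have "k * n + (j - n) = (k-1)*n + j" using kn False by simp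
      thus ?thesis using False i' j' dc unfolding hcat_def blk_def by simp
    qed
  qed (simp_all add: blk_def dc)
qed

lemma hcat_blocks_one:
  "hcat_list (m*n) (map (blk (m*n) n) [1..<m+1]) = (1\<^sub>m (m*n) :: 'a::field mat)"
proof -
  have "hcat_list (m*n) (map (blk (m*n) n) [1..<m+1]) = (mat (m*n) ((m+1-1)*n) (\<lambda>(r,c). if r = (1-1)*n + c then 1 else 0) :: 'a mat)"
    by (rule hcat_blocks) auto
  also have "\<dots> = 1\<^sub>m (m*n)" by (rule eq_matI) auto
  finally show ?thesis .
qed

lemma cols_one: "cols (1\<^sub>m N) = unit_vecs N"
  unfolding cols_def unit_vecs_def by (intro map_cong) auto

lemma col_blk:
  assumes "1 \<le> i" "i \<le> m" "c < n"
  shows "col (blk (m*n) n i) c = (unit_vec (m*n) ((i-1)*n + c) :: 'a::field vec)"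
proof -
  have "(i-1)*n + c < (i-1)*n + n" using assms by simp
  also have "\<dots> = i*n" using assms by (cases i) auto
  also have "\<dots> \<le> m*n" using assms by simp
  finally have lt: "(i-1)*n + c < m*n" .
  show ?thesis unfolding blk_def using assms lt by (intro eq_vecI) auto
qed



context vec_space begin

lemma unit_vecs_li: "lin_indpt (set (unit_vecs n))"
  using unit_vecs_basis unfolding basis_def by simp

lemma rank_blk:
  assumes nn: "n = m*b" and i: "1 \<le> i" "i \<le> m"
  shows "rank (blk n b i) = b"
proof -
  have c: "(blk n b i :: 'a mat) \<in> carrier_mat n b" unfolding blk_def by simp
  have lt: "(i-1)*b + c < n" if "c < b" for c
  proof -
    have "(i-1)*b + c < (i-1)*b + b" using that by simp
    also have "\<dots> = i*b" using i by (cases i) auto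
    also have "\<dots> \<le> m*b" using i by simp
    finally show ?thesis using nn by simp
  qed
  have cl: "cols (blk n b i :: 'a mat) = map (\<lambda>c. unit_vec n ((i-1)*b + c)) [0..<b]"
    unfolding cols_def using col_blk[OF i, of _ b] nn c by (intro map_cong) (auto simp: blk_def)
  have inj: "inj_on (\<lambda>c. (unit_vec n ((i - 1) * b + c) :: 'a vec)) (set [0..<b])"
  proof (rule inj_onI)
      fix x y assume x: "x \<in> set [0..<b]" and y: "y \<in> set [0..<b]"
        and e: "(unit_vec n ((i - 1) * b + x) :: 'a vec) = unit_vec n ((i - 1) * b + y)"
      have "(unit_vec n ((i - 1) * b + x) :: 'a vec) $ ((i - 1) * b + x) = 1" using lt x by simp
      hence "(unit_vec n ((i - 1) * b + y) :: 'a vec) $ ((i - 1) * b + x) = 1" using e by simp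
      thus "x = y" using lt x y by (auto split: if_splits)
    qed
  have "distinct (cols (blk n b i :: 'a mat))" unfolding cl distinct_map using inj by simp
  moreover have "set (cols (blk n b i :: 'a mat)) \<subseteq> set (unit_vecs n)"
    unfolding cl unit_vecs_def using lt by auto
  hence "lin_indpt (set (cols (blk n b i :: 'a mat)))" using subset_li_is_li[OF unit_vecs_li] by blast
  ultimately show ?thesis using lin_indpt_full_rank[OF c] by blast
qed

end


context vec_space begin

lemma dir_fwd_loc:
  fixes R :: "('a mat \<times> 'a mat) list"
  assumes nn: "n = m*b" and wf: "wf_receivers m b R" and ln: "l \<le> m * b" and lic: "linear_index_code m b R l L"
  shows "\<exists>\<rho> (A :: nat \<Rightarrow> 'a mat).
       discrete_polymatroid {1..m+1} \<rho> \<and>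
       representation_matrices {1..m+1} \<rho> A \<and>
       \<rho> {1..m+1} = m * b \<and>
       (\<forall>i\<in>{1..m}. \<rho> {i} = b) \<and> \<rho> {1..m} = m * b \<and> \<rho> {m+1} = l \<and>
       (\<forall>(K,D)\<in>set R.
          let AA = hcat_list (m*b) (map A [1..<m+1]) in
          mrank (hcat_list (m*b) [AA * D, AA * K, A (m+1)])
            = mrank (hcat_list (m*b) [AA * K, A (m+1)]))"
proof -
  have Lc: "L \<in> carrier_mat n l" and dec: "\<forall>(K,D)\<in>set R. \<exists>\<psi>. \<forall>X\<in>carrier_vec n. \<psi> (vmult X K) (vmult X L) = vmult X D"
    using lic unfolding linear_index_code_def nn by auto
  obtain L' where L': "L' \<in> carrier_mat n l" "distinct (cols L')" "lin_indpt (set (cols L'))"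
    "set (cols L) \<subseteq> span (set (cols L'))"
    using extend_cols[OF Lc] ln nn by metis
  define A where "A = (\<lambda>i. if i \<le> m then blk n b i else L')"
  define \<rho> where "\<rho> = (\<lambda>S. mrank (hcat_list n (map A (sorted_list_of_set S))))"
  define E where "E = {1..m+1}"
  have fE: "finite E" unfolding E_def by simp
  have dA: "\<forall>i\<in>E. dim_row (A i) = n" unfolding A_def blk_def using L' by auto
  have poly: "discrete_polymatroid E \<rho>" unfolding \<rho>_def by (rule poly[OF dA fE])
  have rr: "\<rho> S = rk (\<Union>i\<in>S. set (cols (A i)))" if "S \<subseteq> E" for S
    unfolding \<rho>_def using rho_rk[OF dA fE that] .
  have mapA: "map A [1..<m+1] = map (blk n b) [1..<m+1]" unfolding A_def by (intro map_cong) auto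
  have AAeq: "hcat_list n (map A [1..<m+1]) = 1\<^sub>m n" unfolding mapA nn by (rule hcat_blocks_one)
  have dA': "\<forall>M\<in>set (map A [1..<m+1]). dim_row M = n" using dA unfolding E_def by auto
  have "set (cols (hcat_list n (map A [1..<m+1]))) = (\<Union>M\<in>set (map A [1..<m+1]). set (cols M))"
    by (rule hcat_list_props(3)[OF dA'])
  moreover have "set [1..<m+1] = {1..m}" by auto
  ultimately have csm: "(\<Union>i\<in>{1..m}. set (cols (A i))) = set (unit_vecs n)"
    unfolding AAeq cols_one set_map SUP_image o_def by simp
  have m1E: "{1..m} \<subseteq> E" unfolding E_def by auto
  have uc: "set (unit_vecs n) \<subseteq> carrier_vec n" unfolding unit_vecs_def by auto
  have rm: "\<rho> {1..m} = n" using rr[OF m1E] csm rk_full[OF _ uc] by simp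
  have rE: "\<rho> E = n"
  proof -
    have "set (unit_vecs n) \<subseteq> (\<Union>i\<in>E. set (cols (A i)))" using csm m1E by blast
    moreover have "(\<Union>i\<in>E. set (cols (A i))) \<subseteq> carrier_vec n" by (rule cs_carrier[OF dA]) simp
    ultimately show ?thesis using rr[of E] rk_full by simp
  qed
  have rl: "\<rho> {m+1} = l"
  proof -
    have "\<rho> {m+1} = rk (set (cols L'))" using rr[of "{m+1}"] unfolding E_def A_def by simp
    also have "\<dots> = mrank L'" using mrank_rk[of L'] L' by simp
    also have "\<dots> = rank L'" unfolding mrank_def using L' by simp
    also have "\<dots> = l" using lin_indpt_full_rank[OF L'(1,2,3)] .
    finally show ?thesis .
  qed
  have ri: "\<rho> {i} = b" if i: "i \<in> {1..m}" for i
  proof -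
    have iE: "{i} \<subseteq> E" using i unfolding E_def by auto
    have Ai: "A i = (blk n b i :: 'a mat)" using i unfolding A_def by simp
    have "\<rho> {i} = rk (set (cols ((blk n b i :: 'a mat))))" using rr[OF iE] Ai by simp
    also have "\<dots> = mrank ((blk n b i :: 'a mat))" using mrank_rk[of "(blk n b i :: 'a mat)"] by (simp add: blk_def)
    also have "\<dots> = rank ((blk n b i :: 'a mat))" unfolding mrank_def by (simp add: blk_def)
    also have "\<dots> = b" using rank_blk[OF nn] i by auto
    finally show ?thesis .
  qed
  have rep: "representation_matrices E \<rho> A"
    unfolding representation_matrices_def
  proof (intro conjI ballI allI impI)
    fix i assume i: "i \<in> E"
    show "A i \<in> carrier_mat (\<rho> E) (\<rho> {i})"
    proof (cases "i \<le> m")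
      case True
      hence "i \<in> {1..m}" using i unfolding E_def by auto
      thus ?thesis using ri rE True unfolding A_def by (simp add: blk_def)
    next
      case False
      hence "i = m+1" using i unfolding E_def by auto
      thus ?thesis using rl rE L'(1) unfolding A_def by simp
    qed
  next
    fix S assume "S \<subseteq> E"
    show "mrank (hcat_list (\<rho> E) (map A (sorted_list_of_set S))) = \<rho> S" unfolding rE unfolding \<rho>_def ..
  qed
  have c2: "\<forall>(K,D)\<in>set R.
          let AA = hcat_list (m*b) (map A [1..<m+1]) in
          mrank (hcat_list (m*b) [AA * D, AA * K, A (m+1)])
            = mrank (hcat_list (m*b) [AA * K, A (m+1)])"
  proof (intro ballI, clarify)
    fix K D assume KD: "(K, D) \<in> set R"
    have dK: "dim_row K = n" and dD: "dim_row D = n" using wf KD unfolding wf_receivers_def nn by auto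
    obtain \<psi> where psi: "\<forall>X\<in>carrier_vec n. \<psi> (vmult X K) (vmult X L) = vmult X D" using dec KD by auto
    have Am: "A (m+1) = L'" unfolding A_def by simp
    have oD: "1\<^sub>m n * D = D" and oK: "1\<^sub>m n * K = K" using dK dD by auto
    have d3: "\<forall>M\<in>set [D, K, L']. dim_row M = n" using dK dD L' by auto
    have d2: "\<forall>M\<in>set [K, L']. dim_row M = n" using dK L' by auto
    have core: "rk (set (cols D) \<union> (set (cols K) \<union> set (cols L'))) = rk (set (cols K) \<union> set (cols L'))"
      using fwd_core[of K "dim_col K" D "dim_col D" L l L' l \<psi>] dK dD Lc L' psi by auto
    have "mrank (hcat_list n [D, K, L']) = mrank (hcat_list n [K, L'])"
      using core mrank_rk[of "hcat_list n [D, K, L']"] mrank_rk[of "hcat_list n [K, L']"]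
          hcat_list_props(1,3)[OF d3] hcat_list_props(1,3)[OF d2] by simp
    thus "let AA = hcat_list (m*b) (map A [1..<m+1]) in
          mrank (hcat_list (m*b) [AA * D, AA * K, A (m+1)]) = mrank (hcat_list (m*b) [AA * K, A (m+1)])"
      unfolding Let_def nn[symmetric] AAeq oD oK Am .
  qed
  show ?thesis
    apply (rule exI[of _ \<rho>], rule exI[of _ A])
    using poly rep rE ri rm rl c2 nn unfolding E_def by auto
qed

end


theorem theorem1:
  fixes m n l :: nat
    and R :: "('a::{finite,field} mat \<times> 'a mat) list"
  assumes "wf_receivers m n R"
    and "l \<le> m * n"
  shows "(\<exists>L. linear_index_code m n R l L) \<longleftrightarrow>
    (\<exists>\<rho> (A :: nat \<Rightarrow> 'a mat).
       discrete_polymatroid {1..m+1} \<rho> \<and>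
       representation_matrices {1..m+1} \<rho> A \<and>
       \<rho> {1..m+1} = m * n \<and>
       (\<forall>i\<in>{1..m}. \<rho> {i} = n) \<and> \<rho> {1..m} = m * n \<and> \<rho> {m+1} = l \<and>
       (\<forall>(K,D)\<in>set R.
          let AA = hcat_list (m*n) (map A [1..<m+1]) in
          mrank (hcat_list (m*n) [AA * D, AA * K, A (m+1)])
            = mrank (hcat_list (m*n) [AA * K, A (m+1)])))"
proof
  assume "\<exists>L. linear_index_code m n R l L"
  then obtain L where lic: "linear_index_code m n R l L" by blast
  show "\<exists>\<rho> (A :: nat \<Rightarrow> 'a mat).
       discrete_polymatroid {1..m+1} \<rho> \<and>
       representation_matrices {1..m+1} \<rho> A \<and>
       \<rho> {1..m+1} = m * n \<and>
       (\<forall>i\<in>{1..m}. \<rho> {i} = n) \<and> \<rho> {1..m} = m * n \<and> \<rho> {m+1} = l \<and>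
       (\<forall>(K,D)\<in>set R.
          let AA = hcat_list (m*n) (map A [1..<m+1]) in
          mrank (hcat_list (m*n) [AA * D, AA * K, A (m+1)])
            = mrank (hcat_list (m*n) [AA * K, A (m+1)]))"
    by (rule vec_space.dir_fwd_loc[OF refl assms(1) assms(2) lic])
next
  assume "\<exists>\<rho> (A :: nat \<Rightarrow> 'a mat).
       discrete_polymatroid {1..m+1} \<rho> \<and>
       representation_matrices {1..m+1} \<rho> A \<and>
       \<rho> {1..m+1} = m * n \<and>
       (\<forall>i\<in>{1..m}. \<rho> {i} = n) \<and> \<rho> {1..m} = m * n \<and> \<rho> {m+1} = l \<and>
       (\<forall>(K,D)\<in>set R.
          let AA = hcat_list (m*n) (map A [1..<m+1]) in
          mrank (hcat_list (m*n) [AA * D, AA * K, A (m+1)])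
            = mrank (hcat_list (m*n) [AA * K, A (m+1)]))"
  then obtain \<rho> and A :: "nat \<Rightarrow> 'a mat" where h:
       "representation_matrices {1..m+1} \<rho> A"
       "\<rho> {1..m+1} = m * n"
       "\<forall>i\<in>{1..m}. \<rho> {i} = n" "\<rho> {1..m} = m * n" "\<rho> {m+1} = l"
       "\<forall>(K,D)\<in>set R.
          let AA = hcat_list (m*n) (map A [1..<m+1]) in
          mrank (hcat_list (m*n) [AA * D, AA * K, A (m+1)])
            = mrank (hcat_list (m*n) [AA * K, A (m+1)])" by blast
  show "\<exists>L. linear_index_code m n R l L"
    by (rule dir_back[OF assms(1) h])
qed

end
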